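(* For integers $0\le k\le n-1$ and $\lambda\in\mathbb C$, \[ d^k_n(\lambda)=n\,d^k_{n-1}(\lambda)+(\lambda-1)\,d^{k-1}_{n-2}(\lambda), \] where for $k=0$ the convention $d^{-1}_m(\lambda)=(\lambda-1)^{m+1}$ (for $m\ge -1$) is used.
   Context: For $\lambda\in\mathbb C$ and integers $0\le k\le n$, define $e^k_n(\lambda)$ by $e^n_n(\lambda)=n!$ and, for $1\le k\le n$, $e^{k-1}_n(\lambda)=e^k_n(\lambda)+(\lambda-1)e^{k-1}_{n-1}(\lambda)$. Put $d^k_n(\lambda)=e^k_n(\lambda)/k!$. (For nonnegative integer $\lambda$, $d^k_n(\lambda)$ counts permutations of $[n]$ whose first $k$ entries are decreasing, where each fixed point among the last $n-k$ positions is given one of $\lambda$ colours.) *)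

theory Defs
  imports Complex_Main
begin

text \<open>e_n^k(lambda), written e_num lam n k, meaningful for 0 <= k <= n.
  e_n^n = n!, and for k < n: e_n^k = e_n^(k+1) + (lam - 1) e_(n-1)^k
  (the recursion e^(k-1)_n = e^k_n + (lam-1) e^(k-1)_(n-1) with k shifted).
  Values for k > n are irrelevant (set to n!).\<close>
function e_num :: "complex \<Rightarrow> nat \<Rightarrow> nat \<Rightarrow> complex" where
  "e_num lam n k =
     (if n \<le> k then of_nat (fact n)
      else e_num lam n (Suc k) + (lam - 1) * e_num lam (n - 1) k)"
  by auto
termination
  by (relation "measures [\<lambda>(_, n, _). n, \<lambda>(_, n, k). n - k]") auto

declare e_num.simps [simp del]

definition d_num :: "complex \<Rightarrow> nat \<Rightarrow> nat \<Rightarrow> complex" where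
  "d_num lam n k = e_num lam n k / of_nat (fact k)"

end

theory Submission
  imports Defs
begin

lemma e_rec: "k < n \<Longrightarrow> e_num lam n k = e_num lam n (Suc k) + (lam - 1) * e_num lam (n - 1) k"
  by (subst e_num.simps) simp

lemma e_top: "e_num lam n n = of_nat (fact n)"
  by (subst e_num.simps) simp

lemma alg_step:
  fixes x a b c d e f g h :: complex and m j :: nat
  assumes "a = b + x * c" "c = d + x * f" "g = f + x * h"
    "b = of_nat (m+2) * d + of_nat (j+2) * x * f"
    "c = of_nat (m+1) * f + of_nat (j+1) * x * h"
  shows "a = of_nat (m+2) * c + of_nat (j+1) * x * g"
proof -
  have "a - (of_nat (m+2) * c + of_nat (j+1) * x * g) =
        x * (c - (of_nat (m+1) * f + of_nat (j+1) * x * h))"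
    using assms(1-4) by (simp add: algebra_simps)
  then show ?thesis using assms(5) by simp
qed

lemma lemA: "j \<le> m \<Longrightarrow> e_num lam (m+2) (j+1) =
   of_nat (m+2) * e_num lam (m+1) (j+1) + of_nat (j+1) * (lam - 1) * e_num lam m j"
proof (induction m arbitrary: j)
  case 0
  then have j: "j = 0" by simp
  have "e_num lam 2 1 = e_num lam 2 2 + (lam - 1) * e_num lam 1 1"
    using e_rec[of 1 2 lam] by (simp add: numeral_2_eq_2)
  then show ?case using j by (simp add: e_top numeral_2_eq_2 algebra_simps)
next
  case (Suc m)
  show ?case using Suc.prems
  proof (induction j rule: inc_induct)
    case base
    have "e_num lam (Suc m + 2) (Suc m + 1) = e_num lam (Suc m+2) (Suc m+2) + (lam - 1) * e_num lam (Suc m+1) (Suc m+1)"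
      using e_rec[of "Suc m + 1" "Suc m + 2" lam] by simp
    then show ?case by (simp add: e_top algebra_simps)
  next
    case (step j)
    show ?case
    proof (rule alg_step[where m="Suc m" and j=j])
      show "e_num lam (Suc m + 2) (j + 1) = e_num lam (Suc m + 2) (j+2) + (lam - 1) * e_num lam (Suc m + 1) (j + 1)"
        using e_rec[of "j+1" "Suc m + 2" lam] step by simp
      show "e_num lam (Suc m + 1) (j + 1) = e_num lam (Suc m + 1) (j+2) + (lam - 1) * e_num lam (Suc m) (j + 1)"
        using e_rec[of "j+1" "Suc m + 1" lam] step by simp
      show "e_num lam (Suc m) j = e_num lam (Suc m) (j+1) + (lam - 1) * e_num lam m j"
        using e_rec[of "j" "Suc m" lam] step by simp
      show "e_num lam (Suc m + 2) (j+2) = of_nat (Suc m+2) * e_num lam (Suc m + 1) (j+2) + of_nat (j+2) * (lam - 1) * e_num lam (Suc m) (j + 1)"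
        using step.IH by (simp add: add.commute add.left_commute)
      show "e_num lam (Suc m + 1) (j + 1) = of_nat (Suc m+1) * e_num lam (Suc m) (j+1) + of_nat (j+1) * (lam - 1) * e_num lam m j"
        using Suc.IH[of j] step by simp
    qed
  qed
qed

lemma alg_G:
  fixes x a b c d f :: complex and n :: nat
  assumes "a = b + x * c" "c = d + x * f" "b = of_nat (n+2) * d + x * f"
    "c = of_nat (n+1) * f + x ^ (n+1)"
  shows "a = of_nat (n+2) * c + x ^ (n+2)"
proof -
  have "a - (of_nat (n+2) * c + x ^ (n+2)) = x * (c - (of_nat (n+1) * f + x ^ (n+1)))"
    using assms(1-3) by (simp add: algebra_simps)
  then show ?thesis using assms(4) by simp
qed

lemma lemG: "e_num lam (Suc n) 0 = of_nat (Suc n) * e_num lam n 0 + (lam - 1) ^ Suc n"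
proof (induction n)
  case 0
  then show ?case using e_rec[of 0 1 lam] by (simp add: e_top)
next
  case (Suc n)
  have r1: "e_num lam (n+2) 0 = e_num lam (n+2) 1 + (lam - 1) * e_num lam (n+1) 0"
    using e_rec[of 0 "n+2" lam] by simp
  have r2: "e_num lam (n+1) 0 = e_num lam (n+1) 1 + (lam - 1) * e_num lam n 0"
    using e_rec[of 0 "n+1" lam] by simp
  have A: "e_num lam (n+2) 1 = of_nat (n+2) * e_num lam (n+1) 1 + (lam - 1) * e_num lam n 0"
    using lemA[of 0 n lam] by simp
  have IH: "e_num lam (n+1) 0 = of_nat (n+1) * e_num lam n 0 + (lam - 1) ^ (n+1)"
    using Suc.IH by simp
  have "e_num lam (n+2) 0 = of_nat (n+2) * e_num lam (n+1) 0 + (lam - 1) ^ (n+2)"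
    by (rule alg_G[OF r1 r2 A IH])
  then show ?case by (simp add: add.commute)
qed

lemma div_lem:
  fixes c F P E1 E2 x :: complex
  assumes "c \<noteq> 0" "F \<noteq> 0"
  shows "(P * E1 + c * x * E2) / (c * F) = P * (E1 / (c * F)) + x * (E2 / F)"
  using assms by (simp add: field_simps)

theorem mainTheorem5:
  fixes lam :: complex and n k :: nat
  assumes "k \<le> n - 1" and "1 \<le> n"
  shows "d_num lam n k =
           of_nat n * d_num lam (n - 1) k
           + (lam - 1) * (if k = 0 then (lam - 1) ^ (n - 1) else d_num lam (n - 2) (k - 1))"
proof (cases "k = 0")
  case True
  obtain m where n: "n = Suc m" using assms(2) by (cases n) auto
  have "(lam - 1) * (lam - 1) ^ m = (lam - 1) ^ Suc m" by simp
  then show ?thesis using True lemG[of lam m] n by (simp add: d_num_def)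
next
  case False
  obtain j where k: "k = Suc j" using False by (cases k) auto
  have n2: "n \<ge> 2" using assms k by simp
  define m where "m = n - 2"
  have n: "n = m + 2" "j \<le> m" using n2 assms k unfolding m_def by auto
  have A: "e_num lam (m+2) (j+1) =
   of_nat (m+2) * e_num lam (m+1) (j+1) + of_nat (j+1) * (lam - 1) * e_num lam m j"
    using lemA n by simp
  have f: "(fact (Suc j) :: complex) = of_nat (Suc j) * fact j" by simp
  have nz: "(fact j :: complex) \<noteq> 0" by simp
  have nz2: "(of_nat (Suc j) :: complex) \<noteq> 0" by (metis of_nat_eq_0_iff nat.distinct(1))
  have "e_num lam (m+2) (j+1) / fact (Suc j) =
     of_nat (m+2) * (e_num lam (m+1) (j+1) / fact (Suc j)) + (lam - 1) * (e_num lam m j / fact j)"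
    unfolding A f of_nat_Suc[symmetric] using div_lem[OF nz2 nz] by (simp add: add.commute)
  then show ?thesis using k n False by (simp add: d_num_def distrib_right)
qed

end
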